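(* Let $w$ be a nonempty string, and for $1 \le j \le |\mathit{LFCand}(w)|$ let $s_j$ be the $j$-th shortest string of $\mathit{LFCand}(w)$. Then $|s_{j+1}| > 2|s_j|$ for every $1 \le j < |\mathit{LFCand}(w)|$.
   Context: Let $\Sigma$ be a finite ordered alphabet, $\Sigma^+$ the set of nonempty strings over $\Sigma$. For nonempty strings $x,y$, write $x \prec y$ if either $x$ is a proper prefix of $y$, or at the first position $k$ where $x$ and $y$ differ we have $x[k] \prec y[k]$. For a set $S$ of nonempty strings, $\min_\prec S$ is its lexicographically smallest element. $\mathit{Suffix}(w)$ denotes the set of (nonempty) suffixes of $w$. For a nonempty string $w$, $\mathit{LFCand}(w) = \{x \in \mathit{Suffix}(w) \mid \exists y \in \Sigma^+ \text{ such that } xy = \min_\prec \mathit{Suffix}(wy)\}$ (its elements are suffixes of $w$, hence have distinct lengths). *)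

theory Defs
  imports Main
begin

definition lex_less :: "'a::linorder list \<Rightarrow> 'a list \<Rightarrow> bool" where
  "lex_less x y \<longleftrightarrow>
     (length x < length y \<and> take (length x) y = x) \<or>
     (\<exists>k < min (length x) (length y). take k x = take k y \<and> x ! k < y ! k)"

definition Suffixes :: "'a list \<Rightarrow> 'a list set" where
  "Suffixes w = {drop i w | i. i < length w}"

definition is_lexmin :: "'a::linorder list set \<Rightarrow> 'a list \<Rightarrow> bool" where
  "is_lexmin S m \<longleftrightarrow> m \<in> S \<and> (\<forall>z\<in>S. z = m \<or> lex_less m z)"

definition LFCand :: "'a::linorder list \<Rightarrow> 'a list set" where
  "LFCand w = {x \<in> Suffixes w. \<exists>y. y \<noteq> [] \<and> is_lexmin (Suffixes (w @ y)) (x @ y)}"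

end

theory Submission
  imports Defs
begin

lemma lex_less_conv: "lex_less x y \<longleftrightarrow> ord_class.lexordp x y"
  unfolding lexordp_conv_lexord lexord_take_index_conv lex_less_def by auto

lemma lexordp_sufI:
  fixes u w :: "'a::linorder list"
  assumes "ord_class.lexordp u w" "length w \<le> length u"
  shows "ord_class.lexordp (u@v) (w@z)"
  using lexord_sufI assms unfolding lexordp_conv_lexord by blast

lemma lexmin_less:
  assumes "is_lexmin S m" "z \<in> S" "z \<noteq> m"
  shows "ord_class.lexordp m z"
  using assms unfolding is_lexmin_def lex_less_conv by auto

lemma suffix_app:
  assumes "i \<le> length w" "y \<noteq> []"
  shows "drop i w @ y \<in> Suffixes (w @ y)"
  unfolding Suffixes_def using assms by (auto intro!: exI[of _ i] simp: neq_Nil_conv)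

lemma pair:
  fixes w :: "'a::linorder list"
  assumes s: "s \<in> LFCand w" and t: "t \<in> LFCand w" and lt: "length s < length t"
  shows "length t > 2 * length s"
proof (rule ccontr)
  assume le: "\<not> length t > 2 * length s"
  obtain i where si: "s = drop i w" "i < length w" using s unfolding LFCand_def Suffixes_def by auto
  obtain j where tj: "t = drop j w" "j < length w" using t unfolding LFCand_def Suffixes_def by auto
  obtain z where z: "z \<noteq> []" "is_lexmin (Suffixes (w @ z)) (s @ z)"
    using s unfolding LFCand_def by auto
  obtain y where y: "y \<noteq> []" "is_lexmin (Suffixes (w @ y)) (t @ y)"
    using t unfolding LFCand_def by auto
  have ji: "j < i" using lt si tj by auto
  define u where "u = take (i - j) t"
  have tus: "t = u @ s" unfolding u_def using si tj ji
    by (metis append_take_drop_id drop_drop le_add_diff_inverse2 less_imp_le)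
  have un: "u \<noteq> []" using tus lt by auto
  have sz_tz: "ord_class.lexordp (s @ z) (t @ z)"
  proof -
    have "t @ z \<noteq> s @ z" using lt by auto
    then show ?thesis using lexmin_less[OF z(2) suffix_app[of j w z]] tj z by auto
  qed
  have ty_sy: "ord_class.lexordp (t @ y) (s @ y)"
  proof -
    have "s @ y \<noteq> t @ y" using lt by auto
    then show ?thesis using lexmin_less[OF y(2) suffix_app[of i w y]] si y by auto
  qed
  define p where "p = take (length s) t"
  have pre: "p = s"
  proof (rule ccontr)
    assume ne: "p \<noteq> s"
    have lp: "length p = length s" using p_def lt by auto
    have tp: "t = p @ drop (length s) t" unfolding p_def by simp
    from lexordp_linear[of s p] ne show False
    proof (elim disjE)
      assume "ord_class.lexordp s p"
      then have "ord_class.lexordp (s @ y) (p @ (drop (length s) t @ y))" using lp by (intro lexordp_sufI) auto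
      then have "ord_class.lexordp (s @ y) (t @ y)" using tp by (metis append_assoc)
      then show False using ty_sy lexordp_trans lexordp_irreflexive' by blast
    next
      assume "ord_class.lexordp p s"
      then have "ord_class.lexordp (p @ (drop (length s) t @ z)) (s @ z)" using lp by (intro lexordp_sufI) auto
      then have "ord_class.lexordp (t @ z) (s @ z)" using tp by (metis append_assoc)
      then show False using sz_tz lexordp_trans lexordp_irreflexive' by blast
    qed (simp add: ne)
  qed
  have lu: "length u \<le> length s" using tus le by auto
  define r where "r = drop (length u) s"
  have sur: "s = u @ r"
  proof -
    have "take (length u) s = take (length u) t" using pre lu unfolding p_def by (metis take_take min_absorb1)
    also have "\<dots> = u" using tus by simp
    finally show ?thesis unfolding r_def by (metis append_take_drop_id)
  qed
  have rw: "r = drop (length u + i) w" unfolding r_def si by (simp add: add.commute)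
  have "length u + i \<le> length w" using lu si by auto
  then have rz: "r @ z \<in> Suffixes (w @ z)" using suffix_app[OF _ z(1)] rw by auto
  have "r @ z \<noteq> s @ z" using sur un by auto
  then have a: "ord_class.lexordp (s @ z) (r @ z)" using lexmin_less[OF z(2) rz] by auto
  have "ord_class.lexordp (u @ (r @ z)) (u @ (u @ r @ z))" using sz_tz sur tus by simp
  then have "ord_class.lexordp (r @ z) (u @ r @ z)" using lexordp_append_leftD by blast
  then have "ord_class.lexordp (r @ z) (s @ z)" using sur by simp
  then show False using a lexordp_trans lexordp_irreflexive' by blast
qed

theorem lemma6:
  fixes w :: "'a::{linorder,finite} list"
  assumes "w \<noteq> []"
  defines "L \<equiv> sorted_list_of_set (length ` LFCand w)"
  shows "\<forall>j. Suc j < card (LFCand w) \<longrightarrow> L ! (Suc j) > 2 * L ! j"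
proof (intro allI impI)
  fix j assume j: "Suc j < card (LFCand w)"
  have fin: "finite (LFCand w)"
  proof -
    have "Suffixes w = (\<lambda>i. drop i w) ` {..<length w}" unfolding Suffixes_def by auto
    then show ?thesis unfolding LFCand_def by simp
  qed
  have inj: "inj_on length (LFCand w)"
    unfolding inj_on_def LFCand_def Suffixes_def by clarsimp (metis diff_diff_cancel less_imp_le)
  have cL: "length L = card (LFCand w)"
    unfolding L_def using card_image[OF inj] by simp
  have sL: "sorted_wrt (<) L" unfolding L_def by simp
  have lt: "L ! j < L ! Suc j" using sL j cL by (simp add: sorted_wrt_iff_nth_less)
  have "L ! j \<in> length ` LFCand w" "L ! Suc j \<in> length ` LFCand w"
    using j cL unfolding L_def
    by (metis Suc_lessD fin finite_imageI nth_mem set_sorted_list_of_set L_def)+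
  then obtain s t where "s \<in> LFCand w" "t \<in> LFCand w" "L ! j = length s" "L ! Suc j = length t"
    by auto
  then show "L ! Suc j > 2 * L ! j" using pair lt by metis
qed

end
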